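(* Consider the following TOPSIS procedure, parametrized by a metric $\rho$ on $\tilde{\mathbb{I}}$. Given $n$ alternatives $A_1,\dots,A_n$, $m$ attributes $\mathscr{O}_1,\dots,\mathscr{O}_m$ each classified as benefit or cost, an intuitionistic fuzzy decision matrix $R=(r_{ij})_{n\times m}$ with $r_{ij}=\langle\mu_{ij},\nu_{ij}\rangle\in\tilde{\mathbb{I}}$, real weights $\omega_j\in(0,1]$ with $\sum_j\omega_j=1$, and $\lambda\ge1$: (i) $\bar r_{ij}=\langle\bar\mu_{ij},\bar\nu_{ij}\rangle=r_{ij}$ for benefit attributes and $\bar r_{ij}=\langle\nu_{ij},\mu_{ij}\rangle$ for cost attributes; (ii) $\langle\mu_j^+,\nu_j^+\rangle=\langle\max_i\bar\mu_{ij},\min_i\bar\nu_{ij}\rangle$, $\langle\mu_j^-,\nu_j^-\rangle=\langle\min_i\bar\mu_{ij},\max_i\bar\nu_{ij}\rangle$; (iii) $\mathbf{S}(A_i,\mathbf{A}^{\pm})=1-\sum_{j=1}^m\omega_j\,\rho(\bar r_{ij},\langle\mu_j^{\pm},\nu_j^{\pm}\rangle)$; (iv) $\mathscr{C}_i=\frac{\mathbf{S}(A_i,\mathbf{A}^+)}{\mathbf{S}(A_i,\mathbf{A}^+)+\mathbf{S}(A_i,\mathbf{A}^-)}$. Then: (a) with $\rho=\tilde\varrho^{(\lambda)}$, the procedure is increasing with $\le_{ZX}$, i.e., if $\bar r_{i_1j}\le_{ZX}\bar r_{i_2j}$ for all $j$, then $\mathscr{C}_{i_1}\le\mathscr{C}_{i_2}$;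 (b) with $\rho=\varrho^{(\lambda)}_{A,B}$, the procedure is increasing with $\le_{A,B}$, i.e., if $\bar r_{i_1j}\le_{A,B}\bar r_{i_2j}$ for all $j$, then $\mathscr{C}_{i_1}\le\mathscr{C}_{i_2}$.
   Context: $\tilde{\mathbb{I}}=\{\langle\mu,\nu\rangle\in[0,1]^2\mid\mu+\nu\le1\}$. For $\alpha=\langle\mu_\alpha,\nu_\alpha\rangle$: $h(\alpha)=\mu_\alpha+\nu_\alpha$, $\pi_\alpha=1-\mu_\alpha-\nu_\alpha$, $L(\alpha)=\frac{1-\nu_\alpha}{1+\pi_\alpha}$. Order $\le_{ZX}$: $\alpha<_{ZX}\beta$ if $L(\alpha)<L(\beta)$, or $L(\alpha)=L(\beta)$ and $h(\alpha)<h(\beta)$; $\alpha\le_{ZX}\beta$ means $\alpha<_{ZX}\beta$ or $\alpha=\beta$. $\tilde\varrho^{(\lambda)}(\alpha,\beta)=\frac{1}{1+\lambda}(1+\lambda|L(\alpha)-L(\beta)|)$ if $L(\alpha)\ne L(\beta)$, and $=\frac{1}{1+\lambda}|h(\alpha)-h(\beta)|$ otherwise. An aggregation function is $A:[0,1]^2\to[0,1]$ nondecreasing in each variable with $A(0,0)=0$, $A(1,1)=1$. $A,B$ are continuous aggregation functions such that $A(x_1,y_1)=A(x_2,y_2)$ and $B(x_1,y_1)=B(x_2,y_2)$ together imply $(x_1,y_1)=(x_2,y_2)$. Put $\overline{A}(\alpha)=A(\mu_\alpha,1-\nu_\alpha)$, $\overline{B}(\alpha)=B(\mu_\alpha,1-\nu_\alpha)$.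 Order $\le_{A,B}$: $\alpha\le_{A,B}\beta$ iff $\overline{A}(\alpha)<\overline{A}(\beta)$ or ($\overline{A}(\alpha)=\overline{A}(\beta)$ and $\overline{B}(\alpha)\le\overline{B}(\beta)$). $\varrho^{(\lambda)}_{A,B}(\alpha,\beta)=\frac12(1+|\overline{A}(\alpha)-\overline{A}(\beta)|)$ if $\overline{A}(\alpha)\ne\overline{A}(\beta)$, and $=\frac12|\overline{B}(\alpha)-\overline{B}(\beta)|$ otherwise. *)

theory Defs
  imports "HOL-Analysis.Analysis"
begin

definition IFV :: "(real \<times> real) set" where
  "IFV = {(\<mu>, \<nu>). 0 \<le> \<mu> \<and> \<mu> \<le> 1 \<and> 0 \<le> \<nu> \<and> \<nu> \<le> 1 \<and> \<mu> + \<nu> \<le> 1}"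

definition hdeg :: "real \<times> real \<Rightarrow> real" where
  "hdeg a = fst a + snd a"

definition hes :: "real \<times> real \<Rightarrow> real" where
  "hes a = 1 - fst a - snd a"

definition Lval :: "real \<times> real \<Rightarrow> real" where
  "Lval a = (1 - snd a) / (1 + hes a)"

definition zx_less :: "real \<times> real \<Rightarrow> real \<times> real \<Rightarrow> bool" where
  "zx_less a b \<longleftrightarrow> Lval a < Lval b \<or> (Lval a = Lval b \<and> hdeg a < hdeg b)"

definition zx_le :: "real \<times> real \<Rightarrow> real \<times> real \<Rightarrow> bool" where
  "zx_le a b \<longleftrightarrow> zx_less a b \<or> a = b"

definition rho_zx :: "real \<Rightarrow> real \<times> real \<Rightarrow> real \<times> real \<Rightarrow> real" where
  "rho_zx lam a b =
     (if Lval a \<noteq> Lval b then (1 + lam * \<bar>Lval a - Lval b\<bar>) / (1 + lam)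
      else \<bar>hdeg a - hdeg b\<bar> / (1 + lam))"

definition aggregation_fun :: "(real \<Rightarrow> real \<Rightarrow> real) \<Rightarrow> bool" where
  "aggregation_fun A \<longleftrightarrow>
     (\<forall>x\<in>{0..1}. \<forall>y\<in>{0..1}. A x y \<in> {0..1}) \<and>
     (\<forall>x1\<in>{0..1}. \<forall>x2\<in>{0..1}. \<forall>y\<in>{0..1}. x1 \<le> x2 \<longrightarrow> A x1 y \<le> A x2 y) \<and>
     (\<forall>x\<in>{0..1}. \<forall>y1\<in>{0..1}. \<forall>y2\<in>{0..1}. y1 \<le> y2 \<longrightarrow> A x y1 \<le> A x y2) \<and>
     A 0 0 = 0 \<and> A 1 1 = 1"

definition Abar :: "(real \<Rightarrow> real \<Rightarrow> real) \<Rightarrow> real \<times> real \<Rightarrow> real" where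
  "Abar A a = A (fst a) (1 - snd a)"

definition le_AB :: "(real \<Rightarrow> real \<Rightarrow> real) \<Rightarrow> (real \<Rightarrow> real \<Rightarrow> real) \<Rightarrow>
    real \<times> real \<Rightarrow> real \<times> real \<Rightarrow> bool" where
  "le_AB A B a b \<longleftrightarrow> Abar A a < Abar A b \<or> (Abar A a = Abar A b \<and> Abar B a \<le> Abar B b)"

definition rho_AB :: "(real \<Rightarrow> real \<Rightarrow> real) \<Rightarrow> (real \<Rightarrow> real \<Rightarrow> real) \<Rightarrow>
    real \<times> real \<Rightarrow> real \<times> real \<Rightarrow> real" where
  "rho_AB A B a b =
     (if Abar A a \<noteq> Abar A b then (1 + \<bar>Abar A a - Abar A b\<bar>) / 2
      else \<bar>Abar B a - Abar B b\<bar> / 2)"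

text \<open>TOPSIS procedure. Alternatives indexed by i < n, attributes by j < m;
  ben j holds iff attribute j is a benefit attribute (otherwise cost).\<close>
definition rnorm :: "(nat \<Rightarrow> bool) \<Rightarrow> (nat \<Rightarrow> nat \<Rightarrow> real \<times> real) \<Rightarrow> nat \<Rightarrow> nat \<Rightarrow> real \<times> real" where
  "rnorm ben r i j = (if ben j then r i j else (snd (r i j), fst (r i j)))"

definition ideal_pos :: "nat \<Rightarrow> (nat \<Rightarrow> bool) \<Rightarrow> (nat \<Rightarrow> nat \<Rightarrow> real \<times> real) \<Rightarrow> nat \<Rightarrow> real \<times> real" where
  "ideal_pos n ben r j =
     (Max ((\<lambda>i. fst (rnorm ben r i j)) ` {..<n}), Min ((\<lambda>i. snd (rnorm ben r i j)) ` {..<n}))"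

definition ideal_neg :: "nat \<Rightarrow> (nat \<Rightarrow> bool) \<Rightarrow> (nat \<Rightarrow> nat \<Rightarrow> real \<times> real) \<Rightarrow> nat \<Rightarrow> real \<times> real" where
  "ideal_neg n ben r j =
     (Min ((\<lambda>i. fst (rnorm ben r i j)) ` {..<n}), Max ((\<lambda>i. snd (rnorm ben r i j)) ` {..<n}))"

definition simil :: "(real \<times> real \<Rightarrow> real \<times> real \<Rightarrow> real) \<Rightarrow> nat \<Rightarrow> (nat \<Rightarrow> bool) \<Rightarrow>
    (nat \<Rightarrow> real) \<Rightarrow> (nat \<Rightarrow> nat \<Rightarrow> real \<times> real) \<Rightarrow> (nat \<Rightarrow> real \<times> real) \<Rightarrow> nat \<Rightarrow> real" where
  "simil \<rho> m ben \<omega> r ideal i = 1 - (\<Sum>j<m. \<omega> j * \<rho> (rnorm ben r i j) (ideal j))"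

definition closeness :: "(real \<times> real \<Rightarrow> real \<times> real \<Rightarrow> real) \<Rightarrow> nat \<Rightarrow> nat \<Rightarrow> (nat \<Rightarrow> bool) \<Rightarrow>
    (nat \<Rightarrow> real) \<Rightarrow> (nat \<Rightarrow> nat \<Rightarrow> real \<times> real) \<Rightarrow> nat \<Rightarrow> real" where
  "closeness \<rho> n m ben \<omega> r i =
     (let sp = simil \<rho> m ben \<omega> r (ideal_pos n ben r) i;
          sn = simil \<rho> m ben \<omega> r (ideal_neg n ben r) i
      in sp / (sp + sn))"

end

theory Submission
  imports Defs
begin

lemma frac_mono:
  fixes a1 a2 b1 b2 :: real
  assumes "0 \<le> a1" "a1 \<le> a2" "0 \<le> b2" "b2 \<le> b1"
  shows "a1 / (a1 + b1) \<le> a2 / (a2 + b2)"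
proof (cases "a1 + b1 = 0")
  case True then show ?thesis using assms by (simp add: divide_nonneg_nonneg)
next
  case False
  show ?thesis
  proof (cases "a2 + b2 = 0")
    case True then have "a1 = 0" using assms by linarith
    then show ?thesis using assms by (simp add: divide_nonneg_nonneg)
  next
    case F2: False
    have p1: "a1 + b1 > 0" using False assms by linarith
    have p2: "a2 + b2 > 0" using F2 assms by linarith
    have "a1 * b2 \<le> a2 * b1" using assms by (meson mult_mono order_trans)
    then show ?thesis using p1 p2 by (simp add: divide_simps algebra_simps)
  qed
qed

lemma simil_bounds:
  assumes "\<And>j. j<m \<Longrightarrow> 0 \<le> \<omega> j" "(\<Sum>j<m. \<omega> j) = 1"
    "\<And>j. j<m \<Longrightarrow> 0 \<le> \<rho> (rnorm ben r i j) (P j) \<and> \<rho> (rnorm ben r i j) (P j) \<le> 1"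
  shows "0 \<le> simil \<rho> m ben \<omega> r P i \<and> simil \<rho> m ben \<omega> r P i \<le> 1"
proof -
  have "(\<Sum>j<m. \<omega> j * \<rho> (rnorm ben r i j) (P j)) \<le> (\<Sum>j<m. \<omega> j)"
    by (rule sum_mono) (use assms in \<open>auto intro: mult_left_le\<close>)
  moreover have "0 \<le> (\<Sum>j<m. \<omega> j * \<rho> (rnorm ben r i j) (P j))"
    by (rule sum_nonneg) (use assms in auto)
  ultimately show ?thesis using assms(2) unfolding simil_def by linarith
qed

lemma simil_mono:
  assumes "\<And>j. j<m \<Longrightarrow> 0 \<le> \<omega> j"
    "\<And>j. j<m \<Longrightarrow> \<rho> (rnorm ben r i2 j) (P j) \<le> \<rho> (rnorm ben r i1 j) (P j)"
  shows "simil \<rho> m ben \<omega> r P i1 \<le> simil \<rho> m ben \<omega> r P i2"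
proof -
  have "(\<Sum>j<m. \<omega> j * \<rho> (rnorm ben r i2 j) (P j)) \<le> (\<Sum>j<m. \<omega> j * \<rho> (rnorm ben r i1 j) (P j))"
    by (rule sum_mono) (use assms in \<open>auto intro: mult_left_mono\<close>)
  then show ?thesis unfolding simil_def by linarith
qed

lemma closeness_mono:
  assumes w: "\<And>j. j<m \<Longrightarrow> 0 \<le> \<omega> j" and ws: "(\<Sum>j<m. \<omega> j) = 1"
    and bP: "\<And>i j. i \<in> {i1, i2} \<Longrightarrow> j<m \<Longrightarrow> 0 \<le> \<rho> (rnorm ben r i j) (ideal_pos n ben r j) \<and> \<rho> (rnorm ben r i j) (ideal_pos n ben r j) \<le> 1"
    and bN: "\<And>i j. i \<in> {i1, i2} \<Longrightarrow> j<m \<Longrightarrow> 0 \<le> \<rho> (rnorm ben r i j) (ideal_neg n ben r j) \<and> \<rho> (rnorm ben r i j) (ideal_neg n ben r j) \<le> 1"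
    and P: "\<And>j. j<m \<Longrightarrow> \<rho> (rnorm ben r i2 j) (ideal_pos n ben r j) \<le> \<rho> (rnorm ben r i1 j) (ideal_pos n ben r j)"
    and N: "\<And>j. j<m \<Longrightarrow> \<rho> (rnorm ben r i1 j) (ideal_neg n ben r j) \<le> \<rho> (rnorm ben r i2 j) (ideal_neg n ben r j)"
  shows "closeness \<rho> n m ben \<omega> r i1 \<le> closeness \<rho> n m ben \<omega> r i2"
proof -
  have a1: "0 \<le> simil \<rho> m ben \<omega> r (ideal_pos n ben r) i1"
    using simil_bounds[OF w ws, of \<rho> ben r i1 "ideal_pos n ben r"] bP by blast
  have b2: "0 \<le> simil \<rho> m ben \<omega> r (ideal_neg n ben r) i2"
    using simil_bounds[OF w ws, of \<rho> ben r i2 "ideal_neg n ben r"] bN by blast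
  have "simil \<rho> m ben \<omega> r (ideal_pos n ben r) i1 \<le> simil \<rho> m ben \<omega> r (ideal_pos n ben r) i2"
    by (rule simil_mono[OF w P])
  moreover have "simil \<rho> m ben \<omega> r (ideal_neg n ben r) i2 \<le> simil \<rho> m ben \<omega> r (ideal_neg n ben r) i1"
    by (rule simil_mono[OF w N])
  ultimately show ?thesis unfolding closeness_def Let_def using a1 b2 frac_mono by blast
qed

lemma rnorm_ifv: "r i j \<in> IFV \<Longrightarrow> rnorm ben r i j \<in> IFV"
  unfolding rnorm_def IFV_def by auto

lemma ideal_props:
  assumes "i < n" "\<And>i. i<n \<Longrightarrow> rnorm ben r i j \<in> IFV"
  shows "ideal_pos n ben r j \<in> IFV" "fst (rnorm ben r i j) \<le> fst (ideal_pos n ben r j)"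
    "snd (ideal_pos n ben r j) \<le> snd (rnorm ben r i j)"
    "ideal_neg n ben r j \<in> IFV" "fst (ideal_neg n ben r j) \<le> fst (rnorm ben r i j)"
    "snd (rnorm ben r i j) \<le> snd (ideal_neg n ben r j)"
proof -
  let ?f = "\<lambda>i. fst (rnorm ben r i j)" and ?g = "\<lambda>i. snd (rnorm ben r i j)"
  have ne: "{..<n} \<noteq> {}" using assms(1) by auto
  have fin: "finite ({..<n}::nat set)" by simp
  have I: "\<And>i. i < n \<Longrightarrow> 0 \<le> ?f i \<and> ?f i \<le> 1 \<and> 0 \<le> ?g i \<and> ?g i \<le> 1 \<and> ?f i + ?g i \<le> 1"
  proof -
    fix i assume "i < n"
    then have "rnorm ben r i j \<in> IFV" using assms(2) by blast
    then show "0 \<le> ?f i \<and> ?f i \<le> 1 \<and> 0 \<le> ?g i \<and> ?g i \<le> 1 \<and> ?f i + ?g i \<le> 1"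
      unfolding IFV_def by (auto simp: case_prod_beta)
  qed
  have "Max (?f ` {..<n}) \<in> ?f ` {..<n}" by (rule Max_in) (use ne in auto)
  then obtain k1 where k1: "k1 < n" "Max (?f ` {..<n}) = ?f k1" by auto
  have "Min (?g ` {..<n}) \<in> ?g ` {..<n}" by (rule Min_in) (use ne in auto)
  then obtain k2 where k2: "k2 < n" "Min (?g ` {..<n}) = ?g k2" by auto
  have "Min (?f ` {..<n}) \<in> ?f ` {..<n}" by (rule Min_in) (use ne in auto)
  then obtain k3 where k3: "k3 < n" "Min (?f ` {..<n}) = ?f k3" by auto
  have "Max (?g ` {..<n}) \<in> ?g ` {..<n}" by (rule Max_in) (use ne in auto)
  then obtain k4 where k4: "k4 < n" "Max (?g ` {..<n}) = ?g k4" by auto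
  have mf: "\<And>i. i < n \<Longrightarrow> ?f i \<le> ?f k1 \<and> ?f k3 \<le> ?f i"
    using k1 k3 by (metis Max_ge Min_le fin finite_imageI image_eqI lessThan_iff)
  have mg: "\<And>i. i < n \<Longrightarrow> ?g k2 \<le> ?g i \<and> ?g i \<le> ?g k4"
    using k2 k4 by (metis Max_ge Min_le fin finite_imageI image_eqI lessThan_iff)
  show "ideal_pos n ben r j \<in> IFV"
    unfolding ideal_pos_def IFV_def using k1 k2 I[of k1] I[of k2] mg[of k1] by auto
  show "ideal_neg n ben r j \<in> IFV"
    unfolding ideal_neg_def IFV_def using k3 k4 I[of k3] I[of k4] mf[of k4] by auto
  show "fst (rnorm ben r i j) \<le> fst (ideal_pos n ben r j)"
    "snd (ideal_pos n ben r j) \<le> snd (rnorm ben r i j)"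
    "fst (ideal_neg n ben r j) \<le> fst (rnorm ben r i j)"
    "snd (rnorm ben r i j) \<le> snd (ideal_neg n ben r j)"
    unfolding ideal_pos_def ideal_neg_def using k1 k2 k3 k4 mf mg assms(1) by auto
qed

lemma L_top:
  assumes "a \<in> IFV" "p \<in> IFV" "fst a \<le> fst p" "snd p \<le> snd a"
  shows "Lval a \<le> Lval p \<and> (Lval a = Lval p \<longrightarrow> a = p)"
proof -
  obtain \<mu> \<nu> where a: "a = (\<mu>, \<nu>)" by fastforce
  obtain \<mu>' \<nu>' where p: "p = (\<mu>', \<nu>')" by fastforce
  define x where "x = 1 - \<nu>" define y where "y = 1 - \<mu>"
  define x' where "x' = 1 - \<nu>'" define y' where "y' = 1 - \<mu>'"
  have h: "0 \<le> x" "x \<le> x'" "0 \<le> y'" "y' \<le> y" "x + y \<ge> 1" "x' + y' \<ge> 1" "x' \<le> 1" "y \<le> 1"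
    using assms unfolding a p IFV_def x_def y_def x'_def y'_def by auto
  have La: "Lval a = x / (x + y)" unfolding Lval_def hes_def a x_def y_def by simp
  have Lp: "Lval p = x' / (x' + y')" unfolding Lval_def hes_def p x'_def y'_def by simp
  have "x * y' \<le> x' * y" using h by (meson mult_mono order_trans)
  then have le: "Lval a \<le> Lval p" unfolding La Lp using h by (simp add: divide_simps algebra_simps)
  moreover have "a = p" if "Lval a = Lval p"
  proof -
    have e: "x * y' = x' * y" using that h unfolding La Lp by (simp add: divide_simps algebra_simps)
    have "x = x' \<and> y = y'"
    proof (cases "y = 0")
      case True then show ?thesis using h by auto
    next
      case False
      then have yp: "y > 0" using h by auto
      have "x = x'"
      proof (rule ccontr)
        assume "x \<noteq> x'" then have "x < x'" using h by auto
        then have "x * y' \<le> x * y" "x * y < x' * y" using h yp by (auto intro: mult_left_mono)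
        then show False using e by linarith
      qed
      moreover have "y = y'"
      proof (rule ccontr)
        assume "y \<noteq> y'" then have "y' < y" using h by auto
        moreover have "x > 0" using h \<open>y' < y\<close> \<open>x = x'\<close> by linarith
        ultimately have "x * y' < x * y" by simp
        moreover have "x * y' = x * y" using e \<open>x = x'\<close> by simp
        ultimately show False by linarith
      qed
      ultimately show ?thesis by simp
    qed
    then show ?thesis unfolding a p x_def y_def x'_def y'_def by simp
  qed
  ultimately show ?thesis by blast
qed

lemma L_bounds: "a \<in> IFV \<Longrightarrow> 0 \<le> Lval a \<and> Lval a \<le> 1"
  unfolding IFV_def Lval_def hes_def by (auto simp: divide_simps)

lemma h_bounds: "a \<in> IFV \<Longrightarrow> 0 \<le> hdeg a \<and> hdeg a \<le> 1"
  unfolding IFV_def hdeg_def by auto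

lemma rho_zx_bounds:
  assumes "lam \<ge> 1" "a \<in> IFV" "b \<in> IFV"
  shows "0 \<le> rho_zx lam a b \<and> rho_zx lam a b \<le> 1"
proof -
  have "\<bar>Lval a - Lval b\<bar> \<le> 1" "\<bar>hdeg a - hdeg b\<bar> \<le> 1"
    using L_bounds[OF assms(2)] L_bounds[OF assms(3)] h_bounds[OF assms(2)] h_bounds[OF assms(3)] by auto
  then have "lam * \<bar>Lval a - Lval b\<bar> \<le> lam" "\<bar>hdeg a - hdeg b\<bar> \<le> 1 + lam"
    using assms(1) by (auto intro: mult_left_le)
  then show ?thesis unfolding rho_zx_def using assms(1) by (auto simp: divide_simps)
qed

lemma rho_zx_pos:
  assumes "lam \<ge> 1" "a \<in> IFV" "b \<in> IFV" "p \<in> IFV"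
    "fst a \<le> fst p" "snd p \<le> snd a" "fst b \<le> fst p" "snd p \<le> snd b" "zx_le a b"
  shows "rho_zx lam b p \<le> rho_zx lam a p"
proof -
  have A: "Lval a \<le> Lval p \<and> (Lval a = Lval p \<longrightarrow> a = p)" by (rule L_top) (use assms in auto)
  have B: "Lval b \<le> Lval p \<and> (Lval b = Lval p \<longrightarrow> b = p)" by (rule L_top) (use assms in auto)
  have ab: "Lval a \<le> Lval b" using assms(9) unfolding zx_le_def zx_less_def by auto
  show ?thesis
  proof (cases "b = p")
    case True then show ?thesis using rho_zx_bounds[OF assms(1,2,4)] by (simp add: rho_zx_def)
  next
    case False
    then have "Lval b < Lval p" using B by auto
    then have "Lval a < Lval p" using ab by auto
    have "lam * (Lval p - Lval b) \<le> lam * (Lval p - Lval a)" using ab assms(1) by auto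
    then show ?thesis unfolding rho_zx_def using \<open>Lval b < Lval p\<close> \<open>Lval a < Lval p\<close> assms(1)
      by (auto simp: divide_simps)
  qed
qed

lemma rho_zx_neg:
  assumes "lam \<ge> 1" "a \<in> IFV" "b \<in> IFV" "q \<in> IFV"
    "fst q \<le> fst a" "snd a \<le> snd q" "fst q \<le> fst b" "snd b \<le> snd q" "zx_le a b"
  shows "rho_zx lam a q \<le> rho_zx lam b q"
proof -
  have A: "Lval q \<le> Lval a \<and> (Lval q = Lval a \<longrightarrow> q = a)" by (rule L_top) (use assms in auto)
  have B: "Lval q \<le> Lval b \<and> (Lval q = Lval b \<longrightarrow> q = b)" by (rule L_top) (use assms in auto)
  have ab: "Lval a \<le> Lval b" using assms(9) unfolding zx_le_def zx_less_def by auto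
  show ?thesis
  proof (cases "a = q")
    case True then show ?thesis using rho_zx_bounds[OF assms(1,3,4)] by (simp add: rho_zx_def)
  next
    case False
    then have "Lval q < Lval a" using A by auto
    then have "Lval q < Lval b" using ab by auto
    have "lam * (Lval a - Lval q) \<le> lam * (Lval b - Lval q)" using ab assms(1) by auto
    then show ?thesis unfolding rho_zx_def using \<open>Lval q < Lval b\<close> \<open>Lval q < Lval a\<close> assms(1)
      by (auto simp: divide_simps)
  qed
qed

lemma Abar_bounds:
  assumes "aggregation_fun A" "a \<in> IFV"
  shows "0 \<le> Abar A a \<and> Abar A a \<le> 1"
  using assms unfolding aggregation_fun_def Abar_def IFV_def by auto

lemma Abar_mono:
  assumes "aggregation_fun A" "a \<in> IFV" "p \<in> IFV" "fst a \<le> fst p" "snd p \<le> snd a"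
  shows "Abar A a \<le> Abar A p"
proof -
  have m1: "\<And>x1 x2 y. x1\<in>{0..1} \<Longrightarrow> x2\<in>{0..1} \<Longrightarrow> y\<in>{0..1} \<Longrightarrow> x1 \<le> x2 \<Longrightarrow> A x1 y \<le> A x2 y"
   and m2: "\<And>x y1 y2. x\<in>{0..1} \<Longrightarrow> y1\<in>{0..1} \<Longrightarrow> y2\<in>{0..1} \<Longrightarrow> y1 \<le> y2 \<Longrightarrow> A x y1 \<le> A x y2"
    using assms(1) unfolding aggregation_fun_def by blast+
  have "A (fst a) (1 - snd a) \<le> A (fst p) (1 - snd a)"
    by (rule m1) (use assms(2-5) in \<open>auto simp: IFV_def\<close>)
  also have "\<dots> \<le> A (fst p) (1 - snd p)"
    by (rule m2) (use assms(2-5) in \<open>auto simp: IFV_def\<close>)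
  finally show ?thesis unfolding Abar_def .
qed

lemma rho_AB_bounds:
  assumes "aggregation_fun A" "aggregation_fun B" "a \<in> IFV" "b \<in> IFV"
  shows "0 \<le> rho_AB A B a b \<and> rho_AB A B a b \<le> 1"
  using Abar_bounds[OF assms(1,3)] Abar_bounds[OF assms(1,4)]
    Abar_bounds[OF assms(2,3)] Abar_bounds[OF assms(2,4)]
  unfolding rho_AB_def by auto

lemma rho_AB_pos:
  assumes "aggregation_fun A" "aggregation_fun B" "a \<in> IFV" "b \<in> IFV" "p \<in> IFV"
    "fst a \<le> fst p" "snd p \<le> snd a" "fst b \<le> fst p" "snd p \<le> snd b" "le_AB A B a b"
  shows "rho_AB A B b p \<le> rho_AB A B a p"
proof -
  have "Abar A a \<le> Abar A p" "Abar A b \<le> Abar A p" "Abar B a \<le> Abar B p" "Abar B b \<le> Abar B p"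
    using Abar_mono assms by blast+
  moreover note Abar_bounds[OF assms(1,3)] Abar_bounds[OF assms(1,4)] Abar_bounds[OF assms(1,5)]
    Abar_bounds[OF assms(2,3)] Abar_bounds[OF assms(2,4)] Abar_bounds[OF assms(2,5)]
  ultimately show ?thesis using assms(10) unfolding rho_AB_def le_AB_def by (auto simp: abs_if)
qed

lemma rho_AB_neg:
  assumes "aggregation_fun A" "aggregation_fun B" "a \<in> IFV" "b \<in> IFV" "q \<in> IFV"
    "fst q \<le> fst a" "snd a \<le> snd q" "fst q \<le> fst b" "snd b \<le> snd q" "le_AB A B a b"
  shows "rho_AB A B a q \<le> rho_AB A B b q"
proof -
  have "Abar A q \<le> Abar A a" "Abar A q \<le> Abar A b" "Abar B q \<le> Abar B a" "Abar B q \<le> Abar B b"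
    using Abar_mono assms by blast+
  moreover note Abar_bounds[OF assms(1,3)] Abar_bounds[OF assms(1,4)] Abar_bounds[OF assms(1,5)]
    Abar_bounds[OF assms(2,3)] Abar_bounds[OF assms(2,4)] Abar_bounds[OF assms(2,5)]
  ultimately show ?thesis using assms(10) unfolding rho_AB_def le_AB_def by (auto simp: abs_if)
qed

theorem theorem7:
  fixes n m :: nat and ben :: "nat \<Rightarrow> bool" and r :: "nat \<Rightarrow> nat \<Rightarrow> real \<times> real"
    and \<omega> :: "nat \<Rightarrow> real" and lam :: real and A B :: "real \<Rightarrow> real \<Rightarrow> real"
  assumes r_ifv: "\<And>i j. i < n \<Longrightarrow> j < m \<Longrightarrow> r i j \<in> IFV"
    and w_pos: "\<And>j. j < m \<Longrightarrow> 0 < \<omega> j \<and> \<omega> j \<le> 1"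
    and w_sum: "(\<Sum>j<m. \<omega> j) = 1"
    and lam: "lam \<ge> 1"
    and A_agg: "aggregation_fun A" and B_agg: "aggregation_fun B"
    and A_cont: "continuous_on ({0..1} \<times> {0..1}) (\<lambda>(x, y). A x y)"
    and B_cont: "continuous_on ({0..1} \<times> {0..1}) (\<lambda>(x, y). B x y)"
    and AB_inj: "\<And>x1 y1 x2 y2. x1 \<in> {0..1} \<Longrightarrow> y1 \<in> {0..1} \<Longrightarrow> x2 \<in> {0..1} \<Longrightarrow> y2 \<in> {0..1} \<Longrightarrow>
                   A x1 y1 = A x2 y2 \<Longrightarrow> B x1 y1 = B x2 y2 \<Longrightarrow> (x1, y1) = (x2, y2)"
  shows "(\<forall>i1<n. \<forall>i2<n. (\<forall>j<m. zx_le (rnorm ben r i1 j) (rnorm ben r i2 j)) \<longrightarrow>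
            closeness (rho_zx lam) n m ben \<omega> r i1 \<le> closeness (rho_zx lam) n m ben \<omega> r i2)
       \<and> (\<forall>i1<n. \<forall>i2<n. (\<forall>j<m. le_AB A B (rnorm ben r i1 j) (rnorm ben r i2 j)) \<longrightarrow>
            closeness (rho_AB A B) n m ben \<omega> r i1 \<le> closeness (rho_AB A B) n m ben \<omega> r i2)"
proof -
  have w: "\<And>j. j<m \<Longrightarrow> 0 \<le> \<omega> j" using w_pos by force
  have rn: "\<And>i j. i<n \<Longrightarrow> j<m \<Longrightarrow> rnorm ben r i j \<in> IFV" using r_ifv rnorm_ifv by blast
  have ipj: "ideal_pos n ben r j \<in> IFV \<and> fst (rnorm ben r i j) \<le> fst (ideal_pos n ben r j) \<and>
    snd (ideal_pos n ben r j) \<le> snd (rnorm ben r i j) \<and>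
    ideal_neg n ben r j \<in> IFV \<and> fst (ideal_neg n ben r j) \<le> fst (rnorm ben r i j) \<and>
    snd (rnorm ben r i j) \<le> snd (ideal_neg n ben r j)" if "i < n" "j < m" for i j
  proof -
    have "\<And>i. i<n \<Longrightarrow> rnorm ben r i j \<in> IFV" using rn that(2) by blast
    from ideal_props[OF that(1) this] show ?thesis by blast
  qed
  show ?thesis
  proof (intro conjI allI impI)
    fix i1 i2 assume i: "i1 < n" "i2 < n" and le: "\<forall>j<m. zx_le (rnorm ben r i1 j) (rnorm ben r i2 j)"
    show "closeness (rho_zx lam) n m ben \<omega> r i1 \<le> closeness (rho_zx lam) n m ben \<omega> r i2"
    proof (rule closeness_mono[OF w w_sum])
      show "0 \<le> rho_zx lam (rnorm ben r i j) (ideal_pos n ben r j) \<and> rho_zx lam (rnorm ben r i j) (ideal_pos n ben r j) \<le> 1"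
        if "i \<in> {i1, i2}" "j < m" for i j
        proof -
          have "i < n" using that i by auto
          then show ?thesis using rho_zx_bounds[OF lam rn[OF \<open>i < n\<close> that(2)]] ipj[OF \<open>i < n\<close> that(2)] by blast
        qed
      show "0 \<le> rho_zx lam (rnorm ben r i j) (ideal_neg n ben r j) \<and> rho_zx lam (rnorm ben r i j) (ideal_neg n ben r j) \<le> 1"
        if "i \<in> {i1, i2}" "j < m" for i j
        proof -
          have "i < n" using that i by auto
          then show ?thesis using rho_zx_bounds[OF lam rn[OF \<open>i < n\<close> that(2)]] ipj[OF \<open>i < n\<close> that(2)] by blast
        qed
      show "rho_zx lam (rnorm ben r i2 j) (ideal_pos n ben r j) \<le> rho_zx lam (rnorm ben r i1 j) (ideal_pos n ben r j)"
        if "j < m" for j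
        by (rule rho_zx_pos[OF lam]) (use rn[OF i(1) that] rn[OF i(2) that] ipj[OF i(1) that] ipj[OF i(2) that] le that in auto)
      show "rho_zx lam (rnorm ben r i1 j) (ideal_neg n ben r j) \<le> rho_zx lam (rnorm ben r i2 j) (ideal_neg n ben r j)"
        if "j < m" for j
        by (rule rho_zx_neg[OF lam]) (use rn[OF i(1) that] rn[OF i(2) that] ipj[OF i(1) that] ipj[OF i(2) that] le that in auto)
    qed
  next
    fix i1 i2 assume i: "i1 < n" "i2 < n" and le: "\<forall>j<m. le_AB A B (rnorm ben r i1 j) (rnorm ben r i2 j)"
    show "closeness (rho_AB A B) n m ben \<omega> r i1 \<le> closeness (rho_AB A B) n m ben \<omega> r i2"
    proof (rule closeness_mono[OF w w_sum])
      show "0 \<le> rho_AB A B (rnorm ben r i j) (ideal_pos n ben r j) \<and> rho_AB A B (rnorm ben r i j) (ideal_pos n ben r j) \<le> 1"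
        if "i \<in> {i1, i2}" "j < m" for i j
        proof -
          have "i < n" using that i by auto
          then show ?thesis using rho_AB_bounds[OF A_agg B_agg rn[OF \<open>i < n\<close> that(2)]] ipj[OF \<open>i < n\<close> that(2)] by blast
        qed
      show "0 \<le> rho_AB A B (rnorm ben r i j) (ideal_neg n ben r j) \<and> rho_AB A B (rnorm ben r i j) (ideal_neg n ben r j) \<le> 1"
        if "i \<in> {i1, i2}" "j < m" for i j
        proof -
          have "i < n" using that i by auto
          then show ?thesis using rho_AB_bounds[OF A_agg B_agg rn[OF \<open>i < n\<close> that(2)]] ipj[OF \<open>i < n\<close> that(2)] by blast
        qed
      show "rho_AB A B (rnorm ben r i2 j) (ideal_pos n ben r j) \<le> rho_AB A B (rnorm ben r i1 j) (ideal_pos n ben r j)"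
        if "j < m" for j
        by (rule rho_AB_pos[OF A_agg B_agg]) (use rn[OF i(1) that] rn[OF i(2) that] ipj[OF i(1) that] ipj[OF i(2) that] le that in auto)
      show "rho_AB A B (rnorm ben r i1 j) (ideal_neg n ben r j) \<le> rho_AB A B (rnorm ben r i2 j) (ideal_neg n ben r j)"
        if "j < m" for j
        by (rule rho_AB_neg[OF A_agg B_agg]) (use rn[OF i(1) that] rn[OF i(2) that] ipj[OF i(1) that] ipj[OF i(2) that] le that in auto)
    qed
  qed
qed

end
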